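(* Let $E,F,G$ be finite-dimensional Hilbert spaces with fixed orthonormal bases, and set $R=E$, $S=F\otimes G$, $A=E\otimes F$, $B=G$, so that $R\otimes S=A\otimes B=E\otimes F\otimes G$. Let $U$ be any unitary on $E\otimes F\otimes G$, let $|0\rangle\in R$ be a fixed basis vector, and define channels from $S$ to $A$ by $$\mathcal N(\rho)=\operatorname{Tr}_B\big[U(|0\rangle\langle 0|^R\otimes\rho)U^\dagger\big],\qquad \bar{\mathcal N}(\rho)=\operatorname{Tr}_B\big[\bar U(|0\rangle\langle 0|^R\otimes\rho)U^T\big],$$ where $\bar U$ is the entrywise complex conjugate of $U$ in the product basis and $U^T$ its transpose. Let $S_1,S_2$ be two copies of $S$ and $|\Phi\rangle^{S_1S_2}=|S|^{-1/2}\sum_{i}|i\rangle|i\rangle$ the maximally entangled state in the fixed basis. Then the state $(\mathcal N\otimes\bar{\mathcal N})(|\Phi\rangle\langle\Phi|^{S_1S_2})$ on $A_1\otimes A_2$ has an eigenvalue at least $$\frac{|S|}{|A||B|}=\frac{1}{|E|}.$$ More precisely, $\langle\Phi|^{A_1A_2}(\mathcal N\otimes\bar{\mathcal N})(\Phi^{S_1S_2})|\Phi\rangle^{A_1A_2}\ge 1/|E|$, where $|\Phi\rangle^{A_1A_2}$ is the maximally entangled state on two copies of $A$ in the fixed basis.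
   Context: $|X|$ denotes the dimension of $X$. Here $\mathcal N$ acts on $S_1$ with output $A_1$ (using $U$ on $E_1F_1G_1$) and $\bar{\mathcal N}$ acts on $S_2$ with output $A_2$ (using $\bar U$ on $E_2F_2G_2$). *)

theory Defs
  imports Complex_Main
begin

(* Operators on a finite-dimensional Hilbert space with a fixed orthonormal basis
indexed by a finite type 'i are represented by their matrices in that basis,
i.e. as functions 'i \<Rightarrow> 'i \<Rightarrow> complex.  Tensor products of spaces correspond to
product index types, with the product basis *)

type_synonym 'i op = "'i \<Rightarrow> 'i \<Rightarrow> complex"

definition unitary_op :: "('i::finite) op \<Rightarrow> bool" where
  "unitary_op U \<longleftrightarrow>
     (\<forall>a b. (\<Sum>c\<in>UNIV. cnj (U c a) * U c b) = (if a = b then 1 else 0)) \<and>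
     (\<forall>a b. (\<Sum>c\<in>UNIV. U a c * cnj (U b c)) = (if a = b then 1 else 0))"

definition ket_bra :: "'i \<Rightarrow> 'i \<Rightarrow> 'i op" where
  "ket_bra i j = (\<lambda>p q. if p = i \<and> q = j then 1 else 0)"

(* Space ordering: R \<otimes> S = E \<otimes> (F \<otimes> G) and A \<otimes> B = (E \<otimes> F) \<otimes> G, both identified
with the index type 'e \<times> 'f \<times> 'g (product basis).
N(\<rho>) = Tr_B [U (|0><0| \<otimes> \<rho>) U^dagger], with |0> = |e0> *)
definition chanN :: "('e::finite \<times> 'f::finite \<times> 'g::finite) op \<Rightarrow> 'e
     \<Rightarrow> ('f \<times> 'g) op \<Rightarrow> ('e \<times> 'f) op" where
  "chanN U e0 \<rho> = (\<lambda>(x,y) (x',y'). \<Sum>z\<in>UNIV. \<Sum>s\<in>UNIV. \<Sum>s'\<in>UNIV.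
      U (x,y,z) (e0,s) * \<rho> s s' * cnj (U (x',y',z) (e0,s')))"

(* Nbar(\<rho>) = Tr_B [Ubar (|0><0| \<otimes> \<rho>) U^T], Ubar entrywise conjugate *)
definition chanNbar :: "('e::finite \<times> 'f::finite \<times> 'g::finite) op \<Rightarrow> 'e
     \<Rightarrow> ('f \<times> 'g) op \<Rightarrow> ('e \<times> 'f) op" where
  "chanNbar U e0 \<rho> = (\<lambda>(x,y) (x',y'). \<Sum>z\<in>UNIV. \<Sum>s\<in>UNIV. \<Sum>s'\<in>UNIV.
      cnj (U (x,y,z) (e0,s)) * \<rho> s s' * U (x',y',z) (e0,s'))"

(* Tensor product of two linear maps on operators, defined on the matrix-unit basis
and extended linearly: (M1 \<otimes> M2)(X) = \<Sum> X_{(i,k),(j,l)} M1(|i><j|) \<otimes> M2(|k><l|) *)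
definition map_tensor :: "('s1::finite op \<Rightarrow> 'a1 op) \<Rightarrow> ('s2::finite op \<Rightarrow> 'a2 op)
     \<Rightarrow> ('s1 \<times> 's2) op \<Rightarrow> ('a1 \<times> 'a2) op" where
  "map_tensor M1 M2 X = (\<lambda>(a1,a2) (b1,b2).
      \<Sum>i\<in>UNIV. \<Sum>j\<in>UNIV. \<Sum>k\<in>UNIV. \<Sum>l\<in>UNIV.
        X (i,k) (j,l) * M1 (ket_bra i j) a1 b1 * M2 (ket_bra k l) a2 b2)"

definition max_ent :: "('i::finite \<times> 'i) \<Rightarrow> complex" where
  "max_ent = (\<lambda>(i,j). if i = j then 1 / csqrt (of_nat (card (UNIV :: 'i set))) else 0)"

definition proj :: "('i \<Rightarrow> complex) \<Rightarrow> 'i op" where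
  "proj v = (\<lambda>p q. v p * cnj (v q))"

definition expval :: "('i::finite \<Rightarrow> complex) \<Rightarrow> 'i op \<Rightarrow> complex" where
  "expval v X = (\<Sum>p\<in>UNIV. \<Sum>q\<in>UNIV. cnj (v p) * X p q * v q)"

end

theory Submission
  imports Defs
begin

lemma cs_card:
  fixes m :: "'a \<Rightarrow> real"
  assumes "finite A"
  shows "(\<Sum>z\<in>A. m z)^2 \<le> real (card A) * (\<Sum>z\<in>A. (m z)^2)"
proof -
  define S where "S = (\<Sum>z\<in>A. m z)"
  define n where "n = real (card A)"
  have "0 \<le> (\<Sum>z\<in>A. (n * m z - S)^2)" by (simp add: sum_nonneg)
  also have "\<dots> = n^2 * (\<Sum>z\<in>A. (m z)^2) - 2 * n * S * S + n * S^2"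
  proof -
    have "(\<Sum>z\<in>A. (n * m z - S)^2) = (\<Sum>z\<in>A. n^2 * (m z)^2 - (2*n*S) * m z + S^2)"
      by (rule sum.cong) (auto simp: power2_diff power_mult_distrib)
    also have "\<dots> = n^2 * (\<Sum>z\<in>A. (m z)^2) - (2*n*S) * (\<Sum>z\<in>A. m z) + n * S^2"
      by (simp add: sum.distrib sum_subtractf sum_distrib_left n_def)
    finally show ?thesis by (simp add: S_def)
  qed
  finally have h: "0 \<le> n * (n * (\<Sum>z\<in>A. (m z)^2) - S^2)"
    by (simp add: power2_eq_square algebra_simps)
  show ?thesis
  proof (cases "n = 0")
    case True
    then have "A = {}" using assms n_def by simp
    then show ?thesis by simp
  next
    case False
    then have "n > 0" using n_def by simp
    with h have "0 \<le> n * (\<Sum>z\<in>A. (m z)^2) - S^2"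
      by (simp add: zero_le_mult_iff)
    then show ?thesis by (simp add: S_def n_def)
  qed
qed

lemma sum_UNIV_prod: "(\<Sum>p\<in>(UNIV::('a::finite\<times>'b::finite) set). f p) = (\<Sum>a\<in>UNIV. \<Sum>b\<in>UNIV. f (a,b))"
  by (simp add: sum.cartesian_product UNIV_Times_UNIV[symmetric] del: UNIV_Times_UNIV)

lemma cnj_me: "cnj (max_ent p) = max_ent p"
  unfolding max_ent_def by (auto simp: csqrt_of_real[of "real _", simplified] split: prod.splits)

lemma me_sq: "max_ent ((i::'i::finite),i) * max_ent (i,i) = 1 / of_nat (card (UNIV::'i set))"
  unfolding max_ent_def
  by (simp add: csqrt_of_real[of "real _", simplified] of_real_mult[symmetric] del: of_real_mult)

lemma if_conj0: "(if P \<and> Q then x else (0::complex)) = (if P then (if Q then x else 0) else 0)" by simp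
lemma mult_ifL: "(if P then c else 0) * (x::complex) = (if P then c * x else 0)" by simp
lemma mult_ifR: "(x::complex) * (if P then c else 0) = (if P then x * c else 0)" by simp
lemma sum_if_const: "(\<Sum>x\<in>A. if P then f x else (0::complex)) = (if P then (\<Sum>x\<in>A. f x) else 0)" by simp

lemma expval_me:
  "expval (max_ent :: ('a::finite \<times> 'a) \<Rightarrow> complex) T
   = (1 / of_nat (card (UNIV::'a set))) * (\<Sum>a\<in>UNIV. \<Sum>b\<in>UNIV. T (a,a) (b,b))"
proof -
  let ?c = "1 / csqrt (of_nat (card (UNIV::'a set)))"
  have "expval (max_ent :: ('a::finite \<times> 'a) \<Rightarrow> complex) T
     = (\<Sum>a\<in>UNIV. \<Sum>b\<in>UNIV. ?c * T (a,a) (b,b) * ?c)"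
    unfolding expval_def sum_UNIV_prod cnj_me
    by (simp only: max_ent_def case_prod_conv mult_ifL mult_ifR sum_if_const sum.delta sum.delta' UNIV_I if_True mult_zero_left mult_zero_right sum.neutral_const finite_UNIV)
  also have "\<dots> = (\<Sum>a\<in>UNIV. \<Sum>b\<in>UNIV. (?c * ?c) * T (a,a) (b,b))"
    by (simp add: ac_simps)
  also have "\<dots> = (?c * ?c) * (\<Sum>a\<in>UNIV. \<Sum>b\<in>UNIV. T (a,a) (b,b))"
    by (simp add: sum_distrib_left)
  also have "?c * ?c = 1 / of_nat (card (UNIV::'a set))"
    using me_sq[of "undefined::'a"] by (simp add: max_ent_def)
  finally show ?thesis .
qed

lemma tensor_me:
  "map_tensor M1 M2 (proj (max_ent :: ('s::finite \<times> 's) \<Rightarrow> complex)) (a1,a2) (b1,b2)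
   = (1 / of_nat (card (UNIV::'s set))) * (\<Sum>i\<in>UNIV. \<Sum>j\<in>UNIV. M1 (ket_bra i j) a1 b1 * M2 (ket_bra i j) a2 b2)"
proof -
  let ?c = "1 / csqrt (of_nat (card (UNIV::'s set)))"
  have "map_tensor M1 M2 (proj (max_ent :: ('s::finite \<times> 's) \<Rightarrow> complex)) (a1,a2) (b1,b2)
     = (\<Sum>i\<in>UNIV. \<Sum>j\<in>UNIV. ?c * ?c * M1 (ket_bra i j) a1 b1 * M2 (ket_bra i j) a2 b2)"
    unfolding map_tensor_def proj_def cnj_me
    by (simp only: max_ent_def case_prod_conv mult_ifL mult_ifR sum_if_const sum.delta sum.delta' UNIV_I if_True mult_zero_left mult_zero_right sum.neutral_const finite_UNIV)
  also have "\<dots> = (?c * ?c) * (\<Sum>i\<in>UNIV. \<Sum>j\<in>UNIV. M1 (ket_bra i j) a1 b1 * M2 (ket_bra i j) a2 b2)"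
    by (simp add: sum_distrib_left ac_simps)
  also have "?c * ?c = 1 / of_nat (card (UNIV::'s set))"
    using me_sq[of "undefined::'s"] by (simp add: max_ent_def)
  finally show ?thesis .
qed


lemma card_UNIV_prod': "card (UNIV :: ('a::finite \<times> 'b::finite) set) = card (UNIV::'a set) * card (UNIV::'b set)"
  by (simp add: card_cartesian_product flip: UNIV_Times_UNIV)

lemma chanN_kb:
  "chanN U e0 (ket_bra i j) a b = (\<Sum>z\<in>UNIV. U (fst a, snd a, z) (e0,i) * cnj (U (fst b, snd b, z) (e0,j)))"
  by (cases a; cases b) (simp only: chanN_def ket_bra_def case_prod_conv fst_conv snd_conv
      mult_ifL mult_ifR sum_if_const sum.delta sum.delta' UNIV_I if_True mult_zero_left mult_zero_right
      sum.neutral_const finite_UNIV mult_1_right if_conj0)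

lemma chanNbar_kb:
  "chanNbar U e0 (ket_bra i j) a b = (\<Sum>z\<in>UNIV. cnj (U (fst a, snd a, z) (e0,i)) * U (fst b, snd b, z) (e0,j))"
  by (cases a; cases b) (simp only: chanNbar_def ket_bra_def case_prod_conv fst_conv snd_conv
      mult_ifL mult_ifR sum_if_const sum.delta sum.delta' UNIV_I if_True mult_zero_left mult_zero_right
      sum.neutral_const finite_UNIV mult_1_right if_conj0)


lemma reorder6:
  fixes F :: "'a::finite \<Rightarrow> 'b::finite \<Rightarrow> 'c::finite \<Rightarrow> 'd::finite \<Rightarrow> 'e::finite \<Rightarrow> 'f::finite \<Rightarrow> complex"
  shows "(\<Sum>a\<in>UNIV. \<Sum>b\<in>UNIV. \<Sum>i\<in>UNIV. \<Sum>j\<in>UNIV. \<Sum>z\<in>UNIV. \<Sum>w\<in>UNIV. F a b i j z w)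
       = (\<Sum>z\<in>UNIV. \<Sum>w\<in>UNIV. \<Sum>a\<in>UNIV. \<Sum>b\<in>UNIV. \<Sum>i\<in>UNIV. \<Sum>j\<in>UNIV. F a b i j z w)"
proof -
  have L: "(\<Sum>a\<in>UNIV. \<Sum>b\<in>UNIV. \<Sum>i\<in>UNIV. \<Sum>j\<in>UNIV. \<Sum>z\<in>UNIV. \<Sum>w\<in>UNIV. F a b i j z w)
      = (\<Sum>p\<in>UNIV. case p of (a,b,i,j,z,w) \<Rightarrow> F a b i j z w)"
    by (simp only: sum_UNIV_prod case_prod_conv)
  have R: "(\<Sum>z\<in>UNIV. \<Sum>w\<in>UNIV. \<Sum>a\<in>UNIV. \<Sum>b\<in>UNIV. \<Sum>i\<in>UNIV. \<Sum>j\<in>UNIV. F a b i j z w)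
      = (\<Sum>q\<in>UNIV. case q of (z,w,a,b,i,j) \<Rightarrow> F a b i j z w)"
    by (simp only: sum_UNIV_prod case_prod_conv)
  have "(\<Sum>p\<in>UNIV. case p of (a,b,i,j,z,w) \<Rightarrow> F a b i j z w)
      = (\<Sum>q\<in>UNIV. case q of (z,w,a,b,i,j) \<Rightarrow> F a b i j z w)"
    by (rule sum.reindex_bij_witness[where i="\<lambda>(z,w,a,b,i,j). (a,b,i,j,z,w)"
          and j="\<lambda>(a,b,i,j,z,w). (z,w,a,b,i,j)"]) auto
  then show ?thesis using L R by simp
qed

lemma prod4: "(\<Sum>a\<in>A. \<Sum>i\<in>I. X a i) * (\<Sum>b\<in>B. \<Sum>j\<in>J. Y b j) = (\<Sum>a\<in>A. \<Sum>b\<in>B. \<Sum>i\<in>I. \<Sum>j\<in>J. X a i * (Y b j :: complex))"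
  by (simp add: sum_product)

lemma X3c:
  fixes u :: "'a::finite \<Rightarrow> 'g::finite \<Rightarrow> 'b::finite \<Rightarrow> complex"
  shows "(\<Sum>a\<in>UNIV. \<Sum>i\<in>UNIV. u a z i * cnj (u a w i)) * cnj (\<Sum>a\<in>UNIV. \<Sum>i\<in>UNIV. u a z i * cnj (u a w i)) = (\<Sum>a\<in>UNIV. \<Sum>b\<in>UNIV. \<Sum>i\<in>UNIV. \<Sum>j\<in>UNIV.
          u a z i * cnj (u b z j) * (cnj (u a w i) * u b w j))"
proof -
  have c: "cnj (\<Sum>a\<in>UNIV. \<Sum>i\<in>UNIV. u a z i * cnj (u a w i)) = (\<Sum>b\<in>UNIV. \<Sum>j\<in>UNIV. cnj (u b z j) * u b w j)"
    by (simp add: cnj_sum)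
  show ?thesis unfolding c prod4
    by (intro sum.cong refl) (simp only: ac_simps)
qed

lemma X3full:
  fixes u :: "'a::finite \<Rightarrow> 'g::finite \<Rightarrow> 'b::finite \<Rightarrow> complex"
  shows "(\<Sum>a\<in>UNIV. \<Sum>b\<in>UNIV. \<Sum>i\<in>UNIV. \<Sum>j\<in>UNIV. \<Sum>z\<in>UNIV. \<Sum>w\<in>UNIV.
          u a z i * cnj (u b z j) * (cnj (u a w i) * u b w j))
      = (\<Sum>z\<in>UNIV. \<Sum>w\<in>UNIV. (\<Sum>a\<in>UNIV. \<Sum>i\<in>UNIV. u a z i * cnj (u a w i)) * cnj (\<Sum>a\<in>UNIV. \<Sum>i\<in>UNIV. u a z i * cnj (u a w i)))"
  by (rule trans[OF reorder6]) (simp only: X3c)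

theorem lemma2:
  fixes U :: "('e::finite \<times> 'f::finite \<times> 'g::finite) op" and e0 :: 'e
  assumes "unitary_op U"
  shows "Im (expval (max_ent :: ('e \<times> 'f) \<times> ('e \<times> 'f) \<Rightarrow> complex)
              (map_tensor (chanN U e0) (chanNbar U e0)
                 (proj (max_ent :: ('f \<times> 'g) \<times> ('f \<times> 'g) \<Rightarrow> complex)))) = 0
       \<and> Re (expval (max_ent :: ('e \<times> 'f) \<times> ('e \<times> 'f) \<Rightarrow> complex)
              (map_tensor (chanN U e0) (chanNbar U e0)
                 (proj (max_ent :: ('f \<times> 'g) \<times> ('f \<times> 'g) \<Rightarrow> complex))))
           \<ge> 1 / real (card (UNIV :: 'e set))"
proof -
  define u :: "'e\<times>'f \<Rightarrow> 'g \<Rightarrow> 'f\<times>'g \<Rightarrow> complex" where "u a z i = U (fst a, snd a, z) (e0, i)" for a z i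
  define M where "M z w = (\<Sum>a\<in>UNIV. \<Sum>i\<in>UNIV. u a z i * cnj (u a w i))" for z w
  define dA where "dA = card (UNIV :: ('e\<times>'f) set)"
  define dS where "dS = card (UNIV :: ('f\<times>'g) set)"
  define nE where "nE = card (UNIV :: 'e set)"
  define nF where "nF = card (UNIV :: 'f set)"
  define nG where "nG = card (UNIV :: 'g set)"
  have pos: "nE > 0" "nF > 0" "nG > 0"
    unfolding nE_def nF_def nG_def by (simp_all add: finite_UNIV_card_ge_0)
  have dA: "dA = nE * nF" and dS: "dS = nF * nG"
    unfolding dA_def dS_def nE_def nF_def nG_def by (simp_all add: card_UNIV_prod')
  let ?X = "expval (max_ent :: ('e \<times> 'f) \<times> ('e \<times> 'f) \<Rightarrow> complex)
              (map_tensor (chanN U e0) (chanNbar U e0)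
                 (proj (max_ent :: ('f \<times> 'g) \<times> ('f \<times> 'g) \<Rightarrow> complex)))"
  have X1: "?X = (1 / of_nat dA) * (\<Sum>a\<in>UNIV. \<Sum>b\<in>UNIV. (1 / of_nat dS) *
      (\<Sum>i\<in>UNIV. \<Sum>j\<in>UNIV. (\<Sum>z\<in>UNIV. u a z i * cnj (u b z j)) * (\<Sum>w\<in>UNIV. cnj (u a w i) * u b w j)))"
    unfolding expval_me tensor_me chanN_kb chanNbar_kb dA_def dS_def u_def ..
  have X2: "?X = (1 / of_nat dA) * (1 / of_nat dS) *
      (\<Sum>a\<in>UNIV. \<Sum>b\<in>UNIV. \<Sum>i\<in>UNIV. \<Sum>j\<in>UNIV. \<Sum>z\<in>UNIV. \<Sum>w\<in>UNIV.
          u a z i * cnj (u b z j) * (cnj (u a w i) * u b w j))"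
    unfolding X1 sum_product by (simp only: sum_distrib_left[symmetric] mult.assoc)
  have X3: "(\<Sum>a\<in>UNIV. \<Sum>b\<in>UNIV. \<Sum>i\<in>UNIV. \<Sum>j\<in>UNIV. \<Sum>z\<in>UNIV. \<Sum>w\<in>UNIV.
          u a z i * cnj (u b z j) * (cnj (u a w i) * u b w j))
      = (\<Sum>z\<in>UNIV. \<Sum>w\<in>UNIV. M z w * cnj (M z w))"
    unfolding M_def by (rule X3full)
  have X4: "(\<Sum>z\<in>UNIV. \<Sum>w\<in>UNIV. M z w * cnj (M z w)) = of_real (\<Sum>z\<in>UNIV. \<Sum>w\<in>UNIV. (cmod (M z w))^2)"
    by (simp only: of_real_sum complex_norm_square)
  define Q where "Q = (\<Sum>z\<in>UNIV. \<Sum>w\<in>UNIV. (cmod (M z w))^2)"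
  have X: "?X = of_real (Q / (real dA * real dS))"
    using X2 X3 X4 by (simp add: Q_def)
  define m where "m z = (\<Sum>a\<in>UNIV. \<Sum>i\<in>UNIV. (cmod (u a z i))^2)" for z
  have Mzz: "M z z = of_real (m z)" for z
    unfolding M_def m_def by (simp only: of_real_sum complex_norm_square)
  have unit: "(\<Sum>c\<in>UNIV. (cmod (U c x))^2) = 1" for x
  proof -
    have "(\<Sum>c\<in>UNIV. cnj (U c x) * U c x) = (if x = x then 1 else 0)" using assms unfolding unitary_op_def by blast
    then have "(\<Sum>c\<in>UNIV. cnj (U c x) * U c x) = 1" by simp
    then have "of_real (\<Sum>c\<in>UNIV. (cmod (U c x))^2) = (1::complex)"
      by (simp only: of_real_sum complex_norm_square mult.commute)
    then show ?thesis by (simp only: of_real_eq_1_iff)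
  qed
  have summ: "(\<Sum>z\<in>UNIV. m z) = real dS"
  proof -
    define g where "g z a i = (cmod (u a z i))^2" for z a i
    have "(\<Sum>z\<in>UNIV. m z) = (\<Sum>z\<in>UNIV. \<Sum>i\<in>UNIV. \<Sum>a\<in>UNIV. g z a i)"
      unfolding m_def g_def by (rule sum.cong[OF refl], rule sum.swap)
    also have "\<dots> = (\<Sum>i\<in>UNIV. \<Sum>z\<in>UNIV. \<Sum>a\<in>UNIV. g z a i)"
      by (rule sum.swap)
    also have "\<dots> = (\<Sum>i\<in>UNIV. (\<Sum>c\<in>UNIV. (cmod (U c (e0,i)))^2))"
    proof (rule sum.cong[OF refl])
      fix i
      define h where "h x y z = (cmod (U (x,y,z) (e0,i)))^2" for x y z
      have "(\<Sum>z\<in>UNIV. \<Sum>a\<in>UNIV. g z a i) = (\<Sum>z\<in>UNIV. \<Sum>x\<in>UNIV. \<Sum>y\<in>UNIV. h x y z)"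
        unfolding g_def h_def u_def sum_UNIV_prod by simp
      also have "\<dots> = (\<Sum>x\<in>UNIV. \<Sum>z\<in>UNIV. \<Sum>y\<in>UNIV. h x y z)" by (rule sum.swap)
      also have "\<dots> = (\<Sum>x\<in>UNIV. \<Sum>y\<in>UNIV. \<Sum>z\<in>UNIV. h x y z)"
        by (rule sum.cong[OF refl], rule sum.swap)
      also have "\<dots> = (\<Sum>c\<in>UNIV. (cmod (U c (e0,i)))^2)"
        unfolding h_def sum_UNIV_prod by simp
      finally show "(\<Sum>z\<in>UNIV. \<Sum>a\<in>UNIV. g z a i) = (\<Sum>c\<in>UNIV. (cmod (U c (e0,i)))^2)" .
    qed
    also have "\<dots> = real dS" by (simp add: unit dS_def)
    finally show ?thesis .
  qed
  have mnn: "m z \<ge> 0" for z unfolding m_def by (simp add: sum_nonneg)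
  have Q1: "Q \<ge> (\<Sum>z\<in>UNIV. (m z)^2)"
  proof -
    have "(m z)^2 \<le> (\<Sum>w\<in>UNIV. (cmod (M z w))^2)" for z
    proof -
      have "(m z)^2 = (cmod (M z z))^2" using mnn[of z] by (simp add: Mzz)
      also have "\<dots> \<le> (\<Sum>w\<in>UNIV. (cmod (M z w))^2)"
        by (rule member_le_sum[where f="\<lambda>w. (cmod (M z w))^2"]) auto
      finally show ?thesis .
    qed
    then show ?thesis unfolding Q_def by (rule sum_mono)
  qed
  have Q2: "(real dS)^2 \<le> real nG * Q"
  proof -
    have "(real dS)^2 \<le> real nG * (\<Sum>z\<in>UNIV. (m z)^2)"
      using cs_card[of "UNIV::'g set" m] summ by (simp add: nG_def)
    also have "\<dots> \<le> real nG * Q" using Q1 by (simp add: mult_left_mono)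
    finally show ?thesis .
  qed
  have fin: "Q / (real dA * real dS) \<ge> 1 / real nE"
  proof -
    have "real dA * real dS > 0" using pos dA dS by simp
    have "1 / real nE = (real dS)^2 / (real nG * (real dA * real dS))"
      using pos by (simp add: dA dS power2_eq_square field_simps)
    also have "\<dots> \<le> (real nG * Q) / (real nG * (real dA * real dS))"
      using Q2 pos dA dS by (intro divide_right_mono) auto
    also have "\<dots> = Q / (real dA * real dS)" using pos by simp
    finally show ?thesis .
  qed
  show ?thesis using X fin by (simp add: nE_def)
qed

end
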